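(* Let $0<q<1$ and $q^*=2-q$. Let $X_1,X_2,\dots,X_n$ be positive i.i.d. random variables. Then for all $x>0$ and all $a>0$, $$\mathrm{Prob}\left(\frac1n\sum_{k=1}^nX_k\ge x\right)\le\exp_{q^*}(-anx)\,A^n(a),\qquad A(a)=\mathbb{E}\exp_q(aX_1).$$
   Context: For $q\in(0,2)$, $q\ne1$, the $q$-deformed exponential is $\exp_q(u)=[1+(1-q)u]_+^{1/(1-q)}$ for real $u$ (value in $[0,+\infty]$), where $[u]_+=\max(u,0)$. *)

theory Defs
  imports "HOL-Probability.Probability"
begin

definition exp_q :: "real \<Rightarrow> real \<Rightarrow> ennreal" where
  "exp_q q u = (let b = 1 + (1 - q) * u in
     if b > 0 then ennreal (b powr (1 / (1 - q)))
     else if 1 / (1 - q) > 0 then 0 else \<top>)"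

end

theory Submission
  imports Defs
begin

lemma one_plus_sum_le_prod:
  fixes y :: "nat \<Rightarrow> real"
  assumes "finite S" "\<And>i. i \<in> S \<Longrightarrow> 0 \<le> y i"
  shows "1 + (\<Sum>i\<in>S. y i) \<le> (\<Prod>i\<in>S. 1 + y i)"
  using assms
proof (induction S rule: finite_induct)
  case empty
  then show ?case by simp
next
  case (insert j S)
  have s: "0 \<le> (\<Sum>i\<in>S. y i)" using insert by (intro sum_nonneg) auto
  have p: "1 \<le> (\<Prod>i\<in>S. 1 + y i)" using insert s by auto
  have yj: "0 \<le> y j" using insert by auto
  have "1 + (\<Sum>i\<in>insert j S. y i) = y j + (1 + (\<Sum>i\<in>S. y i))" using insert by simp
  also have "\<dots> \<le> y j * (\<Prod>i\<in>S. 1 + y i) + (\<Prod>i\<in>S. 1 + y i)"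
    using insert.IH insert.prems p yj mult_left_mono[OF p yj] by (intro add_mono) auto
  also have "\<dots> = (\<Prod>i\<in>insert j S. 1 + y i)" using insert by (simp add: algebra_simps)
  finally show ?case .
qed

theorem proposition7:
  fixes M :: "'a measure" and X :: "nat \<Rightarrow> 'a \<Rightarrow> real"
    and q :: real and n :: nat and x a :: real
  assumes "prob_space M"
    and "0 < q" "q < 1"
    and "n \<ge> 1"
    and "\<And>k. k \<in> {1..n} \<Longrightarrow> X k \<in> borel_measurable M"
    and "prob_space.indep_vars M (\<lambda>_. borel) X {1..n}"
    and "\<And>k. k \<in> {1..n} \<Longrightarrow> distr M borel (X k) = distr M borel (X 1)"
    and "\<And>k \<omega>. k \<in> {1..n} \<Longrightarrow> \<omega> \<in> space M \<Longrightarrow> X k \<omega> > 0"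
    and "x > 0" "a > 0"
  shows "ennreal (measure M {\<omega> \<in> space M. (1 / real n) * (\<Sum>k=1..n. X k \<omega>) \<ge> x})
    \<le> exp_q (2 - q) (- a * real n * x) * (\<integral>\<^sup>+ \<omega>. exp_q q (a * X 1 \<omega>) \<partial>M) ^ n"
proof -
  interpret P: prob_space M by fact
  define c where "c = 1 - q"
  define p where "p = 1 / c"
  have c: "c > 0" using assms unfolding c_def by simp
  have pp: "p > 0" using c unfolding p_def by simp
  define f where "f t = ennreal ((1 + c * a * t) powr p)" for t
  have fm: "f \<in> borel_measurable borel" unfolding f_def by measurable
  have fe: "exp_q q (a * t) = f t" if "t > 0" for t
  proof -
    have "1 + (1 - q) * (a * t) > 0" using that assms(3,10) by (intro add_pos_pos zero_less_one mult_pos_pos) auto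
    then show ?thesis unfolding exp_q_def f_def p_def c_def Let_def by (simp add: algebra_simps)
  qed
  define b where "b = 1 + c * a * real n * x"
  have b: "b > 0" using c assms(4,9,10) unfolding b_def by (intro add_pos_pos zero_less_one mult_pos_pos) auto
  have eq2: "exp_q (2 - q) (- a * real n * x) = ennreal (b powr (- p))"
  proof -
    have "1 + (1 - (2 - q)) * (- a * real n * x) = b" unfolding b_def c_def by (simp add: algebra_simps)
    moreover have "1 / (1 - (2 - q)) = - p" unfolding p_def c_def proof - have "1 - (2 - q) = - (1 - q)" by simp then show "1 / (1 - (2 - q)) = - (1 / (1 - q))" by (simp only: divide_minus_right) qed
    ultimately show ?thesis using b unfolding exp_q_def Let_def by simp
  qed
  define A where "A = {\<omega> \<in> space M. (1 / real n) * (\<Sum>k=1..n. X k \<omega>) \<ge> x}"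
  have Xm: "(\<lambda>\<omega>. \<Sum>k=1..n. X k \<omega>) \<in> borel_measurable M"
    using assms(5) by (intro borel_measurable_sum) auto
  have Asets: "A \<in> sets M" unfolding A_def using Xm by measurable
  define Y where "Y k \<omega> = f (X k \<omega>)" for k \<omega>
  have indY: "P.indep_vars (\<lambda>_. borel) Y {1..n}"
    unfolding Y_def using P.indep_vars_compose2[OF assms(6), of "\<lambda>_. f" "\<lambda>_. borel"] fm by simp
  have intY: "(\<integral>\<^sup>+\<omega>. (\<Prod>k\<in>{1..n}. Y k \<omega>) \<partial>M) = (\<Prod>k\<in>{1..n}. \<integral>\<^sup>+\<omega>. Y k \<omega> \<partial>M)"
    by (rule P.indep_vars_nn_integral[OF _ indY]) auto
  have Yk: "(\<integral>\<^sup>+\<omega>. Y k \<omega> \<partial>M) = (\<integral>\<^sup>+\<omega>. exp_q q (a * X 1 \<omega>) \<partial>M)" if "k \<in> {1..n}" for k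
  proof -
    have "(\<integral>\<^sup>+\<omega>. Y k \<omega> \<partial>M) = (\<integral>\<^sup>+t. f t \<partial>distr M borel (X k))"
      unfolding Y_def using that assms(5) fm by (simp add: nn_integral_distr)
    also have "\<dots> = (\<integral>\<^sup>+t. f t \<partial>distr M borel (X 1))" using assms(7)[OF that] by simp
    also have "\<dots> = (\<integral>\<^sup>+\<omega>. f (X 1 \<omega>) \<partial>M)"
      using assms(5)[of 1] assms(4) fm by (simp add: nn_integral_distr)
    also have "\<dots> = (\<integral>\<^sup>+\<omega>. exp_q q (a * X 1 \<omega>) \<partial>M)"
      using assms(8)[of 1] assms(4) by (intro nn_integral_cong) (simp add: fe)
    finally show ?thesis .
  qed
  have key: "ennreal (b powr p) * indicator A \<omega> \<le> (\<Prod>k\<in>{1..n}. Y k \<omega>)" if "\<omega> \<in> space M" for \<omega>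
  proof (cases "\<omega> \<in> A")
    case False then show ?thesis by simp
  next
    case True
    let ?S = "\<Sum>k=1..n. X k \<omega>"
    have "x * real n \<le> ?S" using True assms(4) unfolding A_def by (simp add: field_simps)
    then have "b \<le> 1 + c * a * ?S" unfolding b_def using c assms
      by (simp add: mult_left_mono mult.assoc mult.commute mult.left_commute)
    also have "1 + c * a * ?S = 1 + (\<Sum>k=1..n. c * a * X k \<omega>)" by (simp add: sum_distrib_left)
    also have "\<dots> \<le> (\<Prod>k\<in>{1..n}. 1 + c * a * X k \<omega>)"
      using c assms(10) assms(8)[OF _ that] by (intro one_plus_sum_le_prod) (auto intro!: mult_nonneg_nonneg less_imp_le)
    finally have "b powr p \<le> (\<Prod>k\<in>{1..n}. 1 + c * a * X k \<omega>) powr p"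
      using b pp by (intro powr_mono2) auto
    also have "\<dots> = (\<Prod>k\<in>{1..n}. (1 + c * a * X k \<omega>) powr p)" by (rule prod_powr_distrib)
    finally have "ennreal (b powr p) \<le> ennreal (\<Prod>k\<in>{1..n}. (1 + c * a * X k \<omega>) powr p)"
      by (rule ennreal_leI)
    also have "\<dots> = (\<Prod>k\<in>{1..n}. Y k \<omega>)" unfolding Y_def f_def by (rule prod_ennreal[symmetric]) simp
    finally show ?thesis using True by simp
  qed
  have "ennreal (b powr p) * emeasure M A = (\<integral>\<^sup>+\<omega>. ennreal (b powr p) * indicator A \<omega> \<partial>M)"
    using Asets by (simp add: nn_integral_cmult_indicator)
  also have "\<dots> \<le> (\<integral>\<^sup>+\<omega>. (\<Prod>k\<in>{1..n}. Y k \<omega>) \<partial>M)" by (intro nn_integral_mono key)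
  also have "\<dots> = (\<integral>\<^sup>+ \<omega>. exp_q q (a * X 1 \<omega>) \<partial>M) ^ n" using intY Yk by simp
  finally have m: "ennreal (b powr p) * emeasure M A \<le> (\<integral>\<^sup>+ \<omega>. exp_q q (a * X 1 \<omega>) \<partial>M) ^ n" .
  have "ennreal (measure M A) = emeasure M A" by (simp add: P.emeasure_eq_measure)
  also have "\<dots> = ennreal (b powr (-p)) * (ennreal (b powr p) * emeasure M A)"
  proof -
    have "b powr (-p) * b powr p = 1" using b by (simp add: powr_minus)
    then have "ennreal (b powr (-p)) * ennreal (b powr p) = 1" by (simp add: ennreal_mult'[symmetric])
    then show ?thesis by (simp add: mult.assoc[symmetric])
  qed
  also have "\<dots> \<le> ennreal (b powr (-p)) * (\<integral>\<^sup>+ \<omega>. exp_q q (a * X 1 \<omega>) \<partial>M) ^ n"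
    by (intro mult_left_mono m) simp
  finally show ?thesis unfolding A_def eq2 .
qed

end
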